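(* Let $X_1,\dots,X_n\subseteq\mathbb R^m$ ($2\le n\le m$) be smooth tropical hypersurfaces whose intersection is transversal. For nonempty $J\subseteq[n]=\{1,\dots,n\}$ let $U_J=\bigcup_{i\in J}X_i$, let $I=\bigcap_{i=1}^nX_i$ and $U=U_{[n]}$, and write $Z^{(0)}$ for the set of vertices ($0$-cells) of a polyhedral complex $Z$. Then, as disjoint unions (multisets), $$I^{(0)}\;\sqcup\bigsqcup_{|J|=n-1}U_J^{(0)}\;\sqcup\bigsqcup_{|J|=n-3}U_J^{(0)}\;\sqcup\cdots\;=\;U^{(0)}\;\sqcup\bigsqcup_{|J|=n-2}U_J^{(0)}\;\sqcup\bigsqcup_{|J|=n-4}U_J^{(0)}\;\sqcup\cdots,$$ where the unions range over subsets $J\subseteq[n]$ with $|J|\ge1$ of the indicated sizes. That is, for every point $p\in\mathbb R^m$, $$[p\in I^{(0)}]+\#\{J: 1\le|J|\le n-1,\ |J|\equiv n-1 \ (\mathrm{mod}\ 2),\ p\in U_J^{(0)}\}=[p\in U^{(0)}]+\#\{J:1\le|J|\le n-2,\ |J|\equiv n\ (\mathrm{mod}\ 2),\ p\in U_J^{(0)}\}.$$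
   Context: Over $(\mathbb R,\max,+)$, a tropical polynomial is $f(x)=\max_{a\in\mathcal A}\{\lambda_a+a\cdot x\}$, $\mathcal A\subseteq\mathbb Z^{m}$ finite, $\lambda_a\in\mathbb R$; Newton polytope $\Delta_f=\operatorname{conv}(\mathcal A)$; lifted polytope $\tilde\Delta_f=\operatorname{conv}\{(a,t):a\in\mathcal A,t\le\lambda_a\}$, whose bounded faces project to a regular lattice subdivision $\operatorname{Subdiv}(f)$ of $\Delta_f$. $V_{tr}(f)$ is the non-linear locus of $f$, a polyhedral complex of pure dimension $m-1$, with a bijection $C\mapsto C^\vee$ from $k$-cells of $V_{tr}(f)$ to $(m-k)$-cells of $\operatorname{Subdiv}(f)$, $C^\vee=\operatorname{conv}\{a:\lambda_a+a\cdot x=f(x)\}$ for $x$ in the relative interior of $C$. $V_{tr}(f)$ is smooth if every maximal cell of $\operatorname{Subdiv}(f)$ is a lattice simplex of volume $1/m!$. For $X_i=V_{tr}(f_i)$, the union $U_J=\bigcup_{i\in J}X_i$ is the tropical hypersurface $V_{tr}(\bigodot_{i\in J}f_i)$ (the product polynomial has function $\sum_{i\in J}f_i$), with its polyhedral complex structure and subdivision $\operatorname{Subdiv}_{U_J}=\operatorname{Subdiv}(\bigodot_{i\in J}f_i)$; each cell of it has a privileged representation as a Minkowski sum $\sum_{i\in J}\Lambda_i$, $\Lambda_i\in\operatorname{Subdiv}(f_i)$, obtained by uniquely decomposing the corresponding bounded face of $\tilde\Delta_{\bigodot f_i}=\sum\tilde\Delta_{f_i}$. Each cell $C$ of $I_J=\bigcap_{i\in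 J}X_i$ is uniquely $\bigcap_{i\in J}C_i$ with $C_i$ a cell of $X_i$ containing $C$ in its relative interior, and its dual $C^\vee\in\operatorname{Subdiv}_{U_J}$ has privileged representation $\sum_{i\in J}C_i^\vee$. The intersection $X_1\cap\dots\cap X_n$ is transversal if for every $J\subseteq[n]$ with $|J|\ge2$, $I_J$ has dimension $m-|J|$ and every cell $C$ of $I_J$ satisfies $\dim C^\vee=\sum_{i\in J}\dim C_i^\vee$. *)

theory Defs
  imports "HOL-Analysis.Analysis" "HOL-Library.FuncSet"
begin

text \<open>A tropical polynomial in m variables (m = CARD('m)) is a pair (A, lam): a finite
nonempty set A of integer exponent vectors and coefficients lam a for a in A.\<close>

type_synonym 'm trop = "(real^'m) set \<times> (real^'m \<Rightarrow> real)"

definition is_trop :: "'m::finite trop \<Rightarrow> bool" where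
  "is_trop P \<longleftrightarrow> finite (fst P) \<and> fst P \<noteq> {} \<and> (\<forall>a\<in>fst P. \<forall>i. a $ i \<in> \<int>)"

definition teval :: "'m::finite trop \<Rightarrow> real^'m \<Rightarrow> real" where
  "teval P x = Max ((\<lambda>a. snd P a + a \<bullet> x) ` fst P)"

definition active :: "'m::finite trop \<Rightarrow> real^'m \<Rightarrow> (real^'m) set" where
  "active P x = {a \<in> fst P. snd P a + a \<bullet> x = teval P x}"

definition Vtr :: "'m::finite trop \<Rightarrow> (real^'m) set" where
  "Vtr P = {x. \<not> (\<exists>e>0. \<exists>c v. \<forall>y\<in>ball x e. teval P y = c + v \<bullet> y)}"

text \<open>Cells of Subdiv(f): projections conv{a : lam a + a.x = f x} of the bounded faces
of the lifted polytope.\<close>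
definition subdiv_cells :: "'m::finite trop \<Rightarrow> (real^'m) set set" where
  "subdiv_cells P = {convex hull (active P x) | x. True}"

definition lattice_simplex :: "(real^'m::finite) set \<Rightarrow> bool" where
  "lattice_simplex \<sigma> \<longleftrightarrow> (\<exists>S. finite S \<and> card S = CARD('m) + 1 \<and> \<not> affine_dependent S
       \<and> (\<forall>a\<in>S. \<forall>i. a $ i \<in> \<int>) \<and> \<sigma> = convex hull S)"

definition smooth_trop :: "'m::finite trop \<Rightarrow> bool" where
  "smooth_trop P \<longleftrightarrow> (\<forall>\<sigma>\<in>subdiv_cells P. (\<not> (\<exists>\<tau>\<in>subdiv_cells P. \<sigma> \<subset> \<tau>)) \<longrightarrow>
       lattice_simplex \<sigma> \<and> measure lborel \<sigma> = 1 / fact CARD('m))"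

text \<open>The cell of V_tr(f) having p in its relative interior (dual to conv(active P p)).\<close>
definition cell_of :: "'m::finite trop \<Rightarrow> real^'m \<Rightarrow> (real^'m) set" where
  "cell_of P p = {y. active P p \<subseteq> active P y}"

definition hyp_cells :: "'m::finite trop \<Rightarrow> (real^'m) set set" where
  "hyp_cells P = {cell_of P p | p. p \<in> Vtr P}"

definition int_cells :: "(nat \<Rightarrow> 'm::finite trop) \<Rightarrow> nat set \<Rightarrow> (real^'m) set set" where
  "int_cells F J = {(\<Inter>i\<in>J. cell_of (F i) p) | p. p \<in> (\<Inter>i\<in>J. Vtr (F i))}"

definition vertices_of :: "'a set set \<Rightarrow> 'a set" where
  "vertices_of cells = {p. {p} \<in> cells}"

definition tprod :: "(nat \<Rightarrow> 'm::finite trop) \<Rightarrow> nat set \<Rightarrow> 'm trop" where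
  "tprod F J = ((\<lambda>a. \<Sum>i\<in>J. a i) ` (\<Pi>\<^sub>E i\<in>J. fst (F i)),
      (\<lambda>b. Max ((\<lambda>a. \<Sum>i\<in>J. snd (F i) (a i)) `
              {a \<in> (\<Pi>\<^sub>E i\<in>J. fst (F i)). (\<Sum>i\<in>J. a i) = b})))"

text \<open>Transversality of X_1,...,X_n (X_i = V_tr(F i)): for every J with |J| \<ge> 2,
I_J has dimension m - |J| and every cell C of I_J satisfies
dim C^\<or> = sum of dim C_i^\<or>. For p in the relative interior of C,
C^\<or> = conv(active (tprod F J) p) and C_i^\<or> = conv(active (F i) p).\<close>
definition transversal :: "(nat \<Rightarrow> 'm::finite trop) \<Rightarrow> nat \<Rightarrow> bool" where
  "transversal F n \<longleftrightarrow> (\<forall>J. J \<subseteq> {1..n} \<and> card J \<ge> 2 \<longrightarrow>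
      ((\<exists>C\<in>int_cells F J. aff_dim C = int CARD('m) - int (card J)) \<and>
       (\<forall>C\<in>int_cells F J. aff_dim C \<le> int CARD('m) - int (card J))) \<and>
      (\<forall>p\<in>(\<Inter>i\<in>J. Vtr (F i)).
          aff_dim (convex hull (active (tprod F J) p))
            = (\<Sum>i\<in>J. aff_dim (convex hull (active (F i) p)))))"

end

theory Submission
  imports Defs
begin


definition "val P a y = snd P a + a \<bullet> y"

lemma DIM_c: "DIM(real^'m::finite) = CARD('m)"
  by simp

lemma teval_ge:
  assumes "finite (fst P)" "a \<in> fst P"
  shows "snd P a + a \<bullet> y \<le> teval P y"
  unfolding teval_def using assms by (intro Max_ge) auto

lemma teval_in:
  assumes "finite (fst P)" "fst P \<noteq> {}"
  shows "\<exists>a\<in>fst P. teval P y = snd P a + a \<bullet> y"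
proof -
  have "teval P y \<in> (\<lambda>a. snd P a + a \<bullet> y) ` fst P"
    unfolding teval_def using assms by (intro Max_in) auto
  then show ?thesis by auto
qed

lemma active_ne:
  assumes "finite (fst P)" "fst P \<noteq> {}"
  shows "active P y \<noteq> {}"
  using teval_in[OF assms, of y] unfolding active_def by force

lemma active_finite:
  assumes "finite (fst P)"
  shows "finite (active P y)"
  using assms unfolding active_def by auto

lemma L1:
  assumes "finite (fst P)" "fst P \<noteq> {}"
  shows "eventually (\<lambda>y. active P y \<subseteq> active P p) (nhds p)"
proof -
  obtain a0 where a0: "a0 \<in> active P p" using active_ne[OF assms] by blast
  have ev: "eventually (\<lambda>y. snd P b + b \<bullet> y < snd P a0 + a0 \<bullet> y) (nhds p)"
    if "b \<in> fst P - active P p" for b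
  proof -
    have "snd P b + b \<bullet> p < teval P p"
      using that teval_ge[OF assms(1), of b p] unfolding active_def by auto
    moreover have "snd P a0 + a0 \<bullet> p = teval P p" using a0 unfolding active_def by auto
    ultimately have lt: "(snd P b + b \<bullet> p) - (snd P a0 + a0 \<bullet> p) < 0" by simp
    have "((\<lambda>y. (snd P b + b \<bullet> y) - (snd P a0 + a0 \<bullet> y)) \<longlongrightarrow> (snd P b + b \<bullet> p) - (snd P a0 + a0 \<bullet> p)) (nhds p)"
      by (intro tendsto_intros) (simp_all add: filterlim_ident)
    from order_tendstoD(2)[OF this lt] show ?thesis by (rule eventually_mono) simp
  qed
  have "eventually (\<lambda>y. \<forall>b\<in>fst P - active P p. snd P b + b \<bullet> y < snd P a0 + a0 \<bullet> y) (nhds p)"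
    using assms(1) ev by (intro eventually_ball_finite) auto
  then show ?thesis
  proof (rule eventually_mono)
    fix y assume h: "\<forall>b\<in>fst P - active P p. snd P b + b \<bullet> y < snd P a0 + a0 \<bullet> y"
    have "a0 \<in> fst P" using a0 unfolding active_def by auto
    show "active P y \<subseteq> active P p"
    proof
      fix b assume b: "b \<in> active P y"
      show "b \<in> active P p"
      proof (rule ccontr)
        assume "b \<notin> active P p"
        with b h have "snd P b + b \<bullet> y < snd P a0 + a0 \<bullet> y" unfolding active_def by blast
        moreover have "snd P a0 + a0 \<bullet> y \<le> teval P y" using teval_ge[OF assms(1) \<open>a0 \<in> fst P\<close>] .
        ultimately show False using b unfolding active_def by auto
      qed
    qed
  qed
qed




lemma V2:
  assumes fin: "finite (fst P)" and ne: "fst P \<noteq> {}" and nv: "p \<notin> Vtr P"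
  shows "\<exists>a. active P p = {a}"
proof -
  from nv obtain e c v where e: "e > 0" and aff: "\<forall>y\<in>ball p e. teval P y = c + v \<bullet> y"
    unfolding Vtr_def by blast
  have "a = v" if a: "a \<in> active P p" for a
  proof -
    have aP: "a \<in> fst P" and ap: "snd P a + a \<bullet> p = teval P p" using a unfolding active_def by auto
    have g: "0 \<le> (v - a) \<bullet> w" if "norm w < e" for w
    proof -
      have "p + w \<in> ball p e" using that by (simp add: dist_norm)
      hence "teval P (p + w) = c + v \<bullet> (p + w)" using aff by blast
      moreover have "teval P p = c + v \<bullet> p" using aff e by simp
      moreover have "snd P a + a \<bullet> (p + w) \<le> teval P (p + w)" using teval_ge[OF fin aP] .
      ultimately show ?thesis using ap by (simp add: inner_simps algebra_simps)
    qed
    define s where "s = e / (2 * (norm (v - a) + 1))"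
    have pos: "0 < 2 * (norm (v - a) + 1)" by (smt (verit) norm_ge_zero)
    hence s: "s > 0" using e unfolding s_def by (intro divide_pos_pos)
    have ns: "norm (s *\<^sub>R (v - a)) < e"
    proof -
      have "norm (s *\<^sub>R (v - a)) = s * norm (v - a)" using s by simp
      have "norm (v - a) < 2 * (norm (v - a) + 1)" by (smt (verit) norm_ge_zero)
      from mult_strict_left_mono[OF this s] 
      have "s * norm (v - a) < s * (2 * (norm (v - a) + 1))" .
      also have "s * (2 * (norm (v - a) + 1)) = e" unfolding s_def using pos by simp
      finally show ?thesis using \<open>norm (s *\<^sub>R (v - a)) = s * norm (v - a)\<close> by linarith
    qed
    have "0 \<le> (v - a) \<bullet> (s *\<^sub>R (v - a))" using g[OF ns] .
    moreover have "0 \<le> (v - a) \<bullet> (- (s *\<^sub>R (v - a)))" using g ns by (metis norm_minus_cancel)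
    ultimately have "(v - a) \<bullet> (s *\<^sub>R (v - a)) = 0" by (simp add: inner_minus_right)
    hence "s * ((v - a) \<bullet> (v - a)) = 0" by simp
    with s show "a = v" by simp
  qed
  moreover have "active P p \<noteq> {}" using active_ne[OF fin ne] .
  ultimately show ?thesis by blast
qed

lemma V1:
  assumes fin: "finite (fst P)" and ne: "fst P \<noteq> {}" and act: "active P p = {a}"
  shows "p \<notin> Vtr P"
proof -
  from L1[OF fin ne, of p] obtain d where d: "d > 0" and hd: "\<forall>y. dist y p < d \<longrightarrow> active P y \<subseteq> active P p"
    unfolding eventually_nhds_metric by blast
  have "\<forall>y\<in>ball p d. teval P y = snd P a + a \<bullet> y"
  proof
    fix y assume "y \<in> ball p d"
    hence "active P y \<subseteq> {a}" using hd act by (auto simp: dist_commute)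
    moreover have "active P y \<noteq> {}" using active_ne[OF fin ne] .
    ultimately have "a \<in> active P y" by blast
    thus "teval P y = snd P a + a \<bullet> y" unfolding active_def by simp
  qed
  then show ?thesis unfolding Vtr_def using d by blast
qed

lemma Vtr_iff:
  assumes fin: "finite (fst P)" and ne: "fst P \<noteq> {}"
  shows "p \<in> Vtr P \<longleftrightarrow> aff_dim (convex hull (active P p)) \<ge> 1"
proof -
  have "aff_dim (convex hull (active P p)) \<ge> 0"
    using active_ne[OF fin ne, of p] aff_dim_geq[of "active P p"] aff_dim_empty[of "active P p"]
    by (simp add: aff_dim_convex_hull)
  hence "aff_dim (convex hull (active P p)) \<ge> 1 \<longleftrightarrow> \<not> (\<exists>a. active P p = {a})"
    by (auto simp: aff_dim_convex_hull aff_dim_eq_0[symmetric])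
  then show ?thesis using V1[OF fin ne] V2[OF fin ne] by blast
qed

lemma F4:
  fixes P :: "'m::finite trop"
  assumes fin: "finite (fst P)" and ne: "fst P \<noteq> {}"
    and lt: "aff_dim (convex hull (active P p)) < int CARD('m)"
  shows "cell_of P p \<noteq> {p}"
proof -
  let ?A = "active P p"
  obtain a0 where a0: "a0 \<in> ?A" using active_ne[OF fin ne] by blast
  have "aff_dim ?A = int (dim ((\<lambda>x. x - a0) ` ?A))"
    using a0 by (intro aff_dim_eq_dim_subtract) (simp add: hull_inc)
  with lt have dimlt: "dim ((\<lambda>x. x - a0) ` ?A) < DIM(real^'m)" by (simp add: aff_dim_convex_hull)
  obtain h :: "real^'m" where h0: "h \<noteq> 0" and hor: "\<And>y. y \<in> span ((\<lambda>x. x - a0) ` ?A) \<Longrightarrow> orthogonal h y"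
    using orthogonal_to_subspace_exists[OF dimlt] by blast
  have ah: "a \<bullet> h = a0 \<bullet> h" if "a \<in> ?A" for a
  proof -
    have "a - a0 \<in> span ((\<lambda>x. x - a0) ` ?A)" using that by (intro span_base) auto
    hence "h \<bullet> (a - a0) = 0" using hor unfolding orthogonal_def by blast
    thus ?thesis by (simp add: inner_diff_right inner_commute)
  qed
  from L1[OF fin ne, of p] obtain d where d: "d > 0" and hd: "\<forall>y. dist y p < d \<longrightarrow> active P y \<subseteq> ?A"
    unfolding eventually_nhds_metric by blast
  define t where "t = d / (2 * norm h)"
  have t: "t > 0" using d h0 unfolding t_def by simp
  define y where "y = p + t *\<^sub>R h"
  have "dist y p = t * norm h" unfolding y_def using t by (simp add: dist_norm)
  also have "\<dots> = d / 2" unfolding t_def using h0 by simp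
  finally have "dist y p < d" using d by simp
  hence sub: "active P y \<subseteq> ?A" using hd by blast
  obtain c where c: "c \<in> active P y" using active_ne[OF fin ne] by blast
  have valy: "snd P a + a \<bullet> y = teval P p + t * (a0 \<bullet> h)" if "a \<in> ?A" for a
    using that ah[OF that] unfolding y_def active_def by (simp add: inner_simps)
  have "?A \<subseteq> active P y"
  proof
    fix a assume a: "a \<in> ?A"
    have "snd P c + c \<bullet> y = teval P y" using c unfolding active_def by simp
    moreover have "snd P c + c \<bullet> y = snd P a + a \<bullet> y" using valy[OF a] valy c sub by auto
    ultimately show "a \<in> active P y" using a unfolding active_def by simp
  qed
  hence "y \<in> cell_of P p" unfolding cell_of_def by simp
  moreover have "y \<noteq> p" unfolding y_def using t h0 by simp
  ultimately show ?thesis by blast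
qed

lemma F4':
  fixes P :: "'m::finite trop"
  assumes fin: "finite (fst P)" and ne: "fst P \<noteq> {}"
    and eq: "aff_dim (convex hull (active P p)) = int CARD('m)"
  shows "cell_of P p = {p}"
proof -
  let ?A = "active P p"
  obtain a0 where a0: "a0 \<in> ?A" using active_ne[OF fin ne] by blast
  have "aff_dim ?A = int (dim ((\<lambda>x. x - a0) ` ?A))"
    using a0 by (intro aff_dim_eq_dim_subtract) (simp add: hull_inc)
  with eq have "dim ((\<lambda>x. x - a0) ` ?A) = DIM(real^'m)" by (simp add: aff_dim_convex_hull)
  hence sp: "span ((\<lambda>x. x - a0) ` ?A) = UNIV" by (simp only: dim_eq_full)
  have "y = p" if y: "y \<in> cell_of P p" for y
  proof -
    have yA: "?A \<subseteq> active P y" using y unfolding cell_of_def by simp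
    have orth: "(y - p) \<bullet> z = 0" if "z \<in> (\<lambda>x. x - a0) ` ?A" for z
    proof -
      from that obtain a where a: "a \<in> ?A" and z: "z = a - a0" by blast
      have "snd P a + a \<bullet> p = snd P a0 + a0 \<bullet> p" using a a0 unfolding active_def by simp
      moreover have "a \<in> active P y" "a0 \<in> active P y" using a a0 yA by auto
      hence "snd P a + a \<bullet> y = snd P a0 + a0 \<bullet> y" unfolding active_def by simp
      ultimately show ?thesis unfolding z by (simp add: inner_simps inner_commute algebra_simps)
    qed
    have "(y - p) \<bullet> z = 0" if "z \<in> span ((\<lambda>x. x - a0) ` ?A)" for z
      using that
    proof (induction rule: span_induct)
      case base then show ?case
        by (auto simp: subspace_def inner_add_right inner_scaleR_right orth)
    qed (auto simp: orth)
    hence "(y - p) \<bullet> (y - p) = 0" using sp by blast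
    thus ?thesis by simp
  qed
  moreover have "p \<in> cell_of P p" unfolding cell_of_def by simp
  ultimately show ?thesis by blast
qed




lemma sum_eq_termwise:
  fixes f g :: "'a \<Rightarrow> real"
  assumes "finite J" "\<And>i. i \<in> J \<Longrightarrow> f i \<le> g i" "sum g J \<le> sum f J"
  shows "\<forall>i\<in>J. f i = g i"
proof -
  have "sum (\<lambda>i. g i - f i) J = 0" using assms sum_mono[of J f g] by (simp add: sum_subtractf)
  hence "\<forall>i\<in>J. g i - f i = 0" using assms by (subst sum_nonneg_eq_0_iff[symmetric]) auto
  thus ?thesis by auto
qed

locale prodctx =
  fixes F :: "nat \<Rightarrow> 'm::finite trop" and J :: "nat set"
  assumes finJ: "finite J"
    and finF: "\<And>i. i \<in> J \<Longrightarrow> finite (fst (F i))"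
    and neF: "\<And>i. i \<in> J \<Longrightarrow> fst (F i) \<noteq> {}"
begin

abbreviation "E \<equiv> (\<Pi>\<^sub>E i\<in>J. fst (F i))"
abbreviation "T \<equiv> tprod F J"

lemma finE: "finite E" using finJ finF by (intro finite_PiE) auto
lemma neE: "E \<noteq> {}" using neF by (simp add: PiE_eq_empty_iff)

lemma fstT: "fst T = (\<lambda>a. \<Sum>i\<in>J. a i) ` E" unfolding tprod_def by simp
lemma sndT: "snd T b = Max ((\<lambda>a. \<Sum>i\<in>J. snd (F i) (a i)) ` {a \<in> E. (\<Sum>i\<in>J. a i) = b})"
  unfolding tprod_def by simp

lemma finT: "finite (fst T)" using finE fstT by simp
lemma neT: "fst T \<noteq> {}" using neE fstT by simp

lemma sndT_ge: "x \<in> E \<Longrightarrow> (\<Sum>i\<in>J. snd (F i) (x i)) \<le> snd T (\<Sum>i\<in>J. x i)"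
  unfolding sndT using finE by (intro Max_ge) auto

lemma sndT_in: assumes "b \<in> fst T"
  shows "\<exists>x\<in>E. (\<Sum>i\<in>J. x i) = b \<and> snd T b = (\<Sum>i\<in>J. snd (F i) (x i))"
proof -
  have "snd T b \<in> (\<lambda>a. \<Sum>i\<in>J. snd (F i) (a i)) ` {a \<in> E. (\<Sum>i\<in>J. a i) = b}"
    unfolding sndT using finE assms fstT by (intro Max_in) auto
  thus ?thesis by auto
qed

lemma val_sum: "(\<Sum>i\<in>J. snd (F i) (x i)) + (\<Sum>i\<in>J. x i) \<bullet> y = (\<Sum>i\<in>J. snd (F i) (x i) + x i \<bullet> y)"
  by (simp add: inner_sum_left sum.distrib)

lemma choose_active: "\<exists>x. x \<in> (\<Pi>\<^sub>E i\<in>J. active (F i) y)"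
proof -
  have "(\<Pi>\<^sub>E i\<in>J. active (F i) y) \<noteq> {}" using active_ne[OF finF neF] by (auto simp: PiE_eq_empty_iff)
  thus ?thesis by blast
qed

lemma PT1: "teval T y = (\<Sum>i\<in>J. teval (F i) y)"
proof (rule antisym)
  obtain b where b: "b \<in> fst T" "teval T y = snd T b + b \<bullet> y" using teval_in[OF finT neT] by blast
  obtain x where x: "x \<in> E" "(\<Sum>i\<in>J. x i) = b" "snd T b = (\<Sum>i\<in>J. snd (F i) (x i))"
    using sndT_in[OF b(1)] by blast
  have "teval T y = snd T b + b \<bullet> y" by (rule b(2))
  also have "\<dots> = (\<Sum>i\<in>J. snd (F i) (x i)) + (\<Sum>i\<in>J. x i) \<bullet> y" using x(2,3) by simp
  also have "\<dots> = (\<Sum>i\<in>J. snd (F i) (x i) + x i \<bullet> y)" by (rule val_sum)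
  also have "\<dots> \<le> (\<Sum>i\<in>J. teval (F i) y)" using x(1) by (intro sum_mono teval_ge finF) (auto simp: PiE_iff)
  finally show "teval T y \<le> (\<Sum>i\<in>J. teval (F i) y)" .
next
  obtain x where x: "x \<in> (\<Pi>\<^sub>E i\<in>J. active (F i) y)" using choose_active by blast
  have xE: "x \<in> E" using x unfolding active_def by (auto simp: PiE_iff)
  have "(\<Sum>i\<in>J. teval (F i) y) = (\<Sum>i\<in>J. snd (F i) (x i) + x i \<bullet> y)"
    using x unfolding active_def by (intro sum.cong) (auto simp: PiE_iff)
  also have "\<dots> = (\<Sum>i\<in>J. snd (F i) (x i)) + (\<Sum>i\<in>J. x i) \<bullet> y" by (rule val_sum[symmetric])
  also have "\<dots> \<le> snd T (\<Sum>i\<in>J. x i) + (\<Sum>i\<in>J. x i) \<bullet> y" using sndT_ge[OF xE] by simp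
  also have "\<dots> \<le> teval T y" using xE fstT by (intro teval_ge finT) auto
  finally show "(\<Sum>i\<in>J. teval (F i) y) \<le> teval T y" .
qed

lemma PT2: "active T y = (\<lambda>a. \<Sum>i\<in>J. a i) ` (\<Pi>\<^sub>E i\<in>J. active (F i) y)"
proof
  show "active T y \<subseteq> (\<lambda>a. \<Sum>i\<in>J. a i) ` (\<Pi>\<^sub>E i\<in>J. active (F i) y)"
  proof
    fix b assume b: "b \<in> active T y"
    hence bT: "b \<in> fst T" and bv: "snd T b + b \<bullet> y = teval T y" unfolding active_def by auto
    obtain x where x: "x \<in> E" "(\<Sum>i\<in>J. x i) = b" "snd T b = (\<Sum>i\<in>J. snd (F i) (x i))"
      using sndT_in[OF bT] by blast
    have le: "snd (F i) (x i) + x i \<bullet> y \<le> teval (F i) y" if "i \<in> J" for i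
      using x(1) that by (intro teval_ge finF) (auto simp: PiE_iff)
    have "(\<Sum>i\<in>J. teval (F i) y) = snd T b + b \<bullet> y" using bv PT1 by simp
    also have "\<dots> = (\<Sum>i\<in>J. snd (F i) (x i)) + (\<Sum>i\<in>J. x i) \<bullet> y" using x(2,3) by simp
    also have "\<dots> = (\<Sum>i\<in>J. snd (F i) (x i) + x i \<bullet> y)" by (rule val_sum)
    finally have "(\<Sum>i\<in>J. teval (F i) y) \<le> (\<Sum>i\<in>J. snd (F i) (x i) + x i \<bullet> y)" by simp
    from sum_eq_termwise[OF finJ le this]
    have "x \<in> (\<Pi>\<^sub>E i\<in>J. active (F i) y)" using x(1) unfolding active_def by (auto simp: PiE_iff)
    thus "b \<in> (\<lambda>a. \<Sum>i\<in>J. a i) ` (\<Pi>\<^sub>E i\<in>J. active (F i) y)" using x(2) by blast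
  qed
next
  show "(\<lambda>a. \<Sum>i\<in>J. a i) ` (\<Pi>\<^sub>E i\<in>J. active (F i) y) \<subseteq> active T y"
  proof
    fix b assume "b \<in> (\<lambda>a. \<Sum>i\<in>J. a i) ` (\<Pi>\<^sub>E i\<in>J. active (F i) y)"
    then obtain x where x: "x \<in> (\<Pi>\<^sub>E i\<in>J. active (F i) y)" and b: "b = (\<Sum>i\<in>J. x i)" by blast
    have xE: "x \<in> E" using x unfolding active_def by (auto simp: PiE_iff)
    have bT: "b \<in> fst T" using xE b fstT by auto
    have "(\<Sum>i\<in>J. teval (F i) y) = (\<Sum>i\<in>J. snd (F i) (x i) + x i \<bullet> y)"
      using x unfolding active_def by (intro sum.cong) (auto simp: PiE_iff)
    also have "\<dots> = (\<Sum>i\<in>J. snd (F i) (x i)) + (\<Sum>i\<in>J. x i) \<bullet> y" by (rule val_sum[symmetric])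
    also have "\<dots> \<le> snd T b + b \<bullet> y" using sndT_ge[OF xE] b by simp
    finally have "teval T y \<le> snd T b + b \<bullet> y" using PT1 by simp
    moreover have "snd T b + b \<bullet> y \<le> teval T y" using teval_ge[OF finT bT] .
    ultimately show "b \<in> active T y" using bT unfolding active_def by simp
  qed
qed

lemma F5: "cell_of T p = (\<Inter>i\<in>J. cell_of (F i) p)"
proof
  show "(\<Inter>i\<in>J. cell_of (F i) p) \<subseteq> cell_of T p"
  proof
    fix y assume "y \<in> (\<Inter>i\<in>J. cell_of (F i) p)"
    hence "\<forall>i\<in>J. active (F i) p \<subseteq> active (F i) y" unfolding cell_of_def by auto
    hence "(\<Pi>\<^sub>E i\<in>J. active (F i) p) \<subseteq> (\<Pi>\<^sub>E i\<in>J. active (F i) y)" by (intro PiE_mono) auto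
    thus "y \<in> cell_of T p" unfolding cell_of_def PT2 by auto
  qed
next
  show "cell_of T p \<subseteq> (\<Inter>i\<in>J. cell_of (F i) p)"
  proof
    fix y assume y: "y \<in> cell_of T p"
    hence sub: "active T p \<subseteq> active T y" unfolding cell_of_def by simp
    show "y \<in> (\<Inter>i\<in>J. cell_of (F i) p)"
    proof
      fix k assume k: "k \<in> J"
      show "y \<in> cell_of (F k) p" unfolding cell_of_def
      proof (rule CollectI, rule subsetI)
        fix a assume a: "a \<in> active (F k) p"
        obtain x0 where x0: "x0 \<in> (\<Pi>\<^sub>E i\<in>J. active (F i) p)" using choose_active by blast
        define x where "x = x0(k := a)"
        have x: "x \<in> (\<Pi>\<^sub>E i\<in>J. active (F i) p)" using x0 a k unfolding x_def by (auto simp: PiE_iff extensional_def)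
        have xE: "x \<in> E" using x unfolding active_def by (auto simp: PiE_iff)
        have bp: "(\<Sum>i\<in>J. x i) \<in> active T p" using x PT2 by blast
        hence bY: "(\<Sum>i\<in>J. x i) \<in> active T y" using sub by blast
        have "snd T (\<Sum>i\<in>J. x i) + (\<Sum>i\<in>J. x i) \<bullet> p = (\<Sum>i\<in>J. teval (F i) p)"
          using bp PT1 unfolding active_def by simp
        also have "\<dots> = (\<Sum>i\<in>J. snd (F i) (x i) + x i \<bullet> p)"
          using x unfolding active_def by (intro sum.cong) (auto simp: PiE_iff)
        finally have snx: "snd T (\<Sum>i\<in>J. x i) = (\<Sum>i\<in>J. snd (F i) (x i))"
          using val_sum[of x p] by simp
        have "(\<Sum>i\<in>J. teval (F i) y) = snd T (\<Sum>i\<in>J. x i) + (\<Sum>i\<in>J. x i) \<bullet> y"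
          using bY PT1 unfolding active_def by simp
        also have "\<dots> = (\<Sum>i\<in>J. snd (F i) (x i) + x i \<bullet> y)" using snx val_sum by simp
        finally have ge: "(\<Sum>i\<in>J. teval (F i) y) \<le> (\<Sum>i\<in>J. snd (F i) (x i) + x i \<bullet> y)" by simp
        have le: "snd (F i) (x i) + x i \<bullet> y \<le> teval (F i) y" if "i \<in> J" for i
          using xE that by (intro teval_ge finF) (auto simp: PiE_iff)
        from sum_eq_termwise[OF finJ le ge] k
        have "snd (F k) (x k) + x k \<bullet> y = teval (F k) y" by auto
        moreover have "x k = a" unfolding x_def by simp
        ultimately show "a \<in> active (F k) y" using a unfolding active_def by simp
      qed
    qed
  qed
qed

end




definition tog :: "'a \<Rightarrow> 'a set \<Rightarrow> 'a set" where
  "tog r J = (if r \<in> J then J - {r} else insert r J)"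

lemma tog_tog: "tog r (tog r J) = J"
  unfolding tog_def by auto

lemma tog_card:
  assumes "finite J" shows "card (tog r J) mod 2 = (card J + 1) mod 2"
proof (cases "r \<in> J")
  case True
  then have "card J > 0" using assms card_gt_0_iff by blast
  moreover have "card (tog r J) = card J - 1" using True assms unfolding tog_def by simp
  ultimately have e: "card J = card (tog r J) + 1" by linarith
  have "\<And>c::nat. c mod 2 = (c + 1 + 1) mod 2" by presburger
  then show ?thesis unfolding e by blast
next
  case False
  then show ?thesis using assms unfolding tog_def by simp
qed

lemma count_toggle_le:
  assumes N: "finite N" and r: "r \<in> N" "r \<notin> S"
  shows "card {J. S \<subseteq> J \<and> J \<subseteq> N \<and> card J mod 2 = k mod 2}
       \<le> card {J. S \<subseteq> J \<and> J \<subseteq> N \<and> card J mod 2 = (k + 1) mod 2}"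
proof (rule card_inj_on_le)
  show "inj_on (tog r) {J. S \<subseteq> J \<and> J \<subseteq> N \<and> card J mod 2 = k mod 2}"
  proof (rule inj_onI)
    fix x y assume "tog r x = tog r y"
    hence "tog r (tog r x) = tog r (tog r y)" by (rule arg_cong)
    thus "x = y" by (simp only: tog_tog)
  qed
  show "tog r ` {J. S \<subseteq> J \<and> J \<subseteq> N \<and> card J mod 2 = k mod 2}
      \<subseteq> {J. S \<subseteq> J \<and> J \<subseteq> N \<and> card J mod 2 = (k + 1) mod 2}"
  proof clarify
    fix J assume J: "S \<subseteq> J" "J \<subseteq> N" "card J mod 2 = k mod 2"
    have fJ: "finite J" using J(2) N by (rule finite_subset)
    have "S \<subseteq> tog r J" "tog r J \<subseteq> N" using J r unfolding tog_def by auto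
    moreover have "card (tog r J) mod 2 = (k + 1) mod 2" 
    proof -
      have gen: "\<And>a b::nat. a mod 2 = (b + 1) mod 2 \<Longrightarrow> b mod 2 = k mod 2 \<Longrightarrow> a mod 2 = (k + 1) mod 2"
        by presburger
      show ?thesis by (rule gen[OF tog_card[OF fJ, of r] J(3)])
    qed
    ultimately show "S \<subseteq> tog r J \<and> tog r J \<subseteq> N \<and> card (tog r J) mod 2 = (k + 1) mod 2" by blast
  qed
  show "finite {J. S \<subseteq> J \<and> J \<subseteq> N \<and> card J mod 2 = (k + 1) mod 2}"
    by (rule finite_subset[of _ "Pow N"]) (auto simp: N)
qed

lemma count_toggle:
  assumes N: "finite N" and r: "r \<in> N" "r \<notin> S"
  shows "card {J. S \<subseteq> J \<and> J \<subseteq> N \<and> card J mod 2 = k mod 2}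
       = card {J. S \<subseteq> J \<and> J \<subseteq> N \<and> card J mod 2 = (k + 1) mod 2}"
proof -
  have "card {J. S \<subseteq> J \<and> J \<subseteq> N \<and> card J mod 2 = (k + 1) mod 2}
     \<le> card {J. S \<subseteq> J \<and> J \<subseteq> N \<and> card J mod 2 = (k + 1 + 1) mod 2}"
    by (rule count_toggle_le[OF assms])
  also have "(k + 1 + 1) mod 2 = k mod 2" by presburger
  finally show ?thesis using count_toggle_le[OF assms, of k] by simp
qed


lemma sumset_split:
  fixes A :: "nat \<Rightarrow> 'a::comm_monoid_add set"
  assumes J: "finite J" and K: "K \<subseteq> J" and sing: "\<And>i. i \<in> J - K \<Longrightarrow> A i = {c i}"
  shows "(\<lambda>x. \<Sum>i\<in>J. x i) ` (\<Pi>\<^sub>E i\<in>J. A i)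
       = (+) (\<Sum>i\<in>J - K. c i) ` ((\<lambda>x. \<Sum>i\<in>K. x i) ` (\<Pi>\<^sub>E i\<in>K. A i))"
proof -
  have split: "(\<Sum>i\<in>J. x i) = (\<Sum>i\<in>J - K. x i) + (\<Sum>i\<in>K. x i)" for x :: "nat \<Rightarrow> 'a"
    by (rule sum.subset_diff[OF K J])
  show ?thesis
  proof
    show "(\<lambda>x. \<Sum>i\<in>J. x i) ` (\<Pi>\<^sub>E i\<in>J. A i)
       \<subseteq> (+) (\<Sum>i\<in>J - K. c i) ` ((\<lambda>x. \<Sum>i\<in>K. x i) ` (\<Pi>\<^sub>E i\<in>K. A i))"
    proof
      fix b assume "b \<in> (\<lambda>x. \<Sum>i\<in>J. x i) ` (\<Pi>\<^sub>E i\<in>J. A i)"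
      then obtain x where x: "x \<in> (\<Pi>\<^sub>E i\<in>J. A i)" and b: "b = (\<Sum>i\<in>J. x i)" by blast
      have "(\<Sum>i\<in>J - K. x i) = (\<Sum>i\<in>J - K. c i)"
        using x sing by (intro sum.cong) (auto simp: PiE_iff)
      moreover have "restrict x K \<in> (\<Pi>\<^sub>E i\<in>K. A i)" using x K by (auto simp: PiE_iff)
      moreover have "(\<Sum>i\<in>K. restrict x K i) = (\<Sum>i\<in>K. x i)" by simp
      ultimately have "b = (\<Sum>i\<in>J - K. c i) + (\<Sum>i\<in>K. restrict x K i)"
        "(\<Sum>i\<in>K. restrict x K i) \<in> ((\<lambda>x. \<Sum>i\<in>K. x i) ` (\<Pi>\<^sub>E i\<in>K. A i))"
        unfolding b split by (auto intro!: image_eqI[where x="restrict x K"])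
      thus "b \<in> (+) (\<Sum>i\<in>J - K. c i) ` ((\<lambda>x. \<Sum>i\<in>K. x i) ` (\<Pi>\<^sub>E i\<in>K. A i))"
        by blast
    qed
  next
    show "(+) (\<Sum>i\<in>J - K. c i) ` ((\<lambda>x. \<Sum>i\<in>K. x i) ` (\<Pi>\<^sub>E i\<in>K. A i))
       \<subseteq> (\<lambda>x. \<Sum>i\<in>J. x i) ` (\<Pi>\<^sub>E i\<in>J. A i)"
    proof clarify
      fix x assume x: "x \<in> (\<Pi>\<^sub>E i\<in>K. A i)"
      define z where "z = (\<lambda>i. if i \<in> K then x i else if i \<in> J then c i else undefined)"
      have z: "z \<in> (\<Pi>\<^sub>E i\<in>J. A i)" using x K sing unfolding z_def by (auto simp: PiE_iff extensional_def)
      have "(\<Sum>i\<in>J. z i) = (\<Sum>i\<in>J - K. c i) + (\<Sum>i\<in>K. x i)"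
        unfolding split by (intro arg_cong2[where f="(+)"] sum.cong) (auto simp: z_def)
      thus "(\<Sum>i\<in>J - K. c i) + (\<Sum>i\<in>K. x i) \<in> (\<lambda>x. \<Sum>i\<in>J. x i) ` (\<Pi>\<^sub>E i\<in>J. A i)"
        using z by (auto intro!: image_eqI[where x=z])
    qed
  qed
qed

lemma sumset_single: "(\<lambda>x. \<Sum>i\<in>{k}. x i) ` (\<Pi>\<^sub>E i\<in>{k}. A i) = A k"
proof
  show "(\<lambda>x. \<Sum>i\<in>{k}. x i) ` (\<Pi>\<^sub>E i\<in>{k}. A i) \<subseteq> A k" by (auto simp: PiE_iff)
  show "A k \<subseteq> (\<lambda>x. \<Sum>i\<in>{k}. x i) ` (\<Pi>\<^sub>E i\<in>{k}. A i)"
  proof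
    fix a assume a: "a \<in> A k"
    have "(\<lambda>i. if i = k then a else undefined) \<in> (\<Pi>\<^sub>E i\<in>{k}. A i)" using a by (auto simp: PiE_iff extensional_def)
    moreover have "a = (\<Sum>i\<in>{k}. (\<lambda>i. if i = k then a else undefined) i)" by simp
    ultimately show "a \<in> (\<lambda>x. \<Sum>i\<in>{k}. x i) ` (\<Pi>\<^sub>E i\<in>{k}. A i)" by blast
  qed
qed

lemma sumset_empty: "(\<lambda>x. \<Sum>i\<in>{}. x i) ` (\<Pi>\<^sub>E i\<in>{}. A i) = {0}"
  by simp





lemma vertex_hyp:
  fixes P :: "'m::finite trop"
  assumes fin: "finite (fst P)" and ne: "fst P \<noteq> {}"
  shows "p \<in> vertices_of (hyp_cells P) \<longleftrightarrow> aff_dim (convex hull (active P p)) = int CARD('m)"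
proof
  assume "p \<in> vertices_of (hyp_cells P)"
  then obtain q where q: "q \<in> Vtr P" "{p} = cell_of P q" unfolding vertices_of_def hyp_cells_def by blast
  have "q \<in> cell_of P q" unfolding cell_of_def by simp
  hence "q = p" using q(2) by blast
  hence c: "cell_of P p = {p}" using q(2) by simp
  have le: "aff_dim (convex hull (active P p)) \<le> int CARD('m)"
    using aff_dim_le_DIM[of "convex hull (active P p)"] by simp
  show "aff_dim (convex hull (active P p)) = int CARD('m)"
  proof (rule ccontr)
    assume "aff_dim (convex hull (active P p)) \<noteq> int CARD('m)"
    with le have "aff_dim (convex hull (active P p)) < int CARD('m)" by simp
    from F4[OF fin ne this] c show False by simp
  qed
next
  assume eq: "aff_dim (convex hull (active P p)) = int CARD('m)"
  have c: "cell_of P p = {p}" using F4'[OF fin ne eq] .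
  have "p \<in> Vtr P" using Vtr_iff[OF fin ne] eq by simp
  hence "{p} \<in> hyp_cells P" using c unfolding hyp_cells_def by blast
  thus "p \<in> vertices_of (hyp_cells P)" unfolding vertices_of_def by simp
qed

lemma cell_iff:
  fixes P :: "'m::finite trop"
  assumes fin: "finite (fst P)" and ne: "fst P \<noteq> {}"
  shows "cell_of P p = {p} \<longleftrightarrow> aff_dim (convex hull (active P p)) = int CARD('m)"
proof
  assume c: "cell_of P p = {p}"
  have le: "aff_dim (convex hull (active P p)) \<le> int CARD('m)"
    using aff_dim_le_DIM[of "convex hull (active P p)"] by simp
  show "aff_dim (convex hull (active P p)) = int CARD('m)"
  proof (rule ccontr)
    assume "aff_dim (convex hull (active P p)) \<noteq> int CARD('m)"
    with le have "aff_dim (convex hull (active P p)) < int CARD('m)" by simp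
    from F4[OF fin ne this] c show False by simp
  qed
qed (rule F4'[OF fin ne])




lemma par: "(1::nat) \<le> n \<Longrightarrow> (n - 1) mod 2 \<noteq> n mod 2"
  by (cases n) (auto simp: mod_Suc split: if_splits)
lemma ar1: "(2::nat) \<le> n \<Longrightarrow> c \<le> n \<Longrightarrow> c mod 2 = (n - 1) mod 2 \<Longrightarrow> c \<le> n - 1"
proof -
  assume a: "(2::nat) \<le> n" "c \<le> n" "c mod 2 = (n - 1) mod 2"
  have "c \<noteq> n" using par[of n] a by auto
  thus ?thesis using a by linarith
qed
lemma ar2: "(2::nat) \<le> n \<Longrightarrow> c \<le> n \<Longrightarrow> c mod 2 = n mod 2 \<Longrightarrow> c \<noteq> n \<Longrightarrow> c \<le> n - 2"
proof -
  assume a: "(2::nat) \<le> n" "c \<le> n" "c mod 2 = n mod 2" "c \<noteq> n"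
  have "c \<noteq> n - 1" using par[of n] a by auto
  thus ?thesis using a by linarith
qed
lemma ar3: "(2::nat) \<le> n \<Longrightarrow> n mod 2 = (n - 1 + 1) mod 2" by simp

theorem lemma3p4:
  fixes F :: "nat \<Rightarrow> 'm::finite trop" and n :: nat and p :: "real^'m"
  assumes "2 \<le> n" and "n \<le> CARD('m)"
    and "\<And>i. i \<in> {1..n} \<Longrightarrow> is_trop (F i)"
    and "\<And>i. i \<in> {1..n} \<Longrightarrow> smooth_trop (F i)"
    and "transversal F n"
  shows "(if p \<in> vertices_of (int_cells F {1..n}) then 1 else 0)
           + card {J. J \<subseteq> {1..n} \<and> 1 \<le> card J \<and> card J \<le> n - 1 \<and> card J mod 2 = (n - 1) mod 2
                     \<and> p \<in> vertices_of (hyp_cells (tprod F J))}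
         = (if p \<in> vertices_of (hyp_cells (tprod F {1..n})) then 1 else (0::nat))
           + card {J. J \<subseteq> {1..n} \<and> 1 \<le> card J \<and> card J \<le> n - 2 \<and> card J mod 2 = n mod 2
                     \<and> p \<in> vertices_of (hyp_cells (tprod F J))}"
proof -
  define N where "N = {1..n}"
  define m where "m = int CARD('m)"
  have finN: "finite N" unfolding N_def by simp
  have cardN: "card N = n" unfolding N_def by simp
  have fF: "finite (fst (F i))" and nF: "fst (F i) \<noteq> {}" if "i \<in> N" for i
    using assms(3)[of i] that unfolding N_def is_trop_def by auto
  have ctx: "prodctx F J" if "J \<subseteq> N" for J
  proof
    show "finite J" using that finN by (rule finite_subset)
  qed (use that fF nF in auto)
  define dd where "dd J = aff_dim (convex hull (active (tprod F J) p))" for J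
  define d where "d i = aff_dim (convex hull (active (F i) p))" for i
  define S where "S = {i \<in> N. p \<in> Vtr (F i)}"
  have SN: "S \<subseteq> N" unfolding S_def by auto
  define c where "c i = (SOME c. active (F i) p = {c})" for i
  have sing: "active (F i) p = {c i}" if "i \<in> N - S" for i
  proof -
    have "\<exists>c. active (F i) p = {c}" using V2[OF fF nF] that unfolding S_def by auto
    thus ?thesis unfolding c_def by (rule someI_ex)
  qed
  have d0: "d i = 0" if "i \<in> N - S" for i
    unfolding d_def sing[OF that] by simp
  have d1: "d i \<ge> 1" if "i \<in> S" for i
    using Vtr_iff[OF fF nF, of i p] that unfolding S_def d_def by auto
  have d1': "0 \<le> d i" if "i \<in> S" for i using d1[OF that] by simp
  have dd_act: "active (tprod F J) p = (\<lambda>x. \<Sum>i\<in>J. x i) ` (\<Pi>\<^sub>E i\<in>J. active (F i) p)" if "J \<subseteq> N" for J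
    using prodctx.PT2[OF ctx[OF that]] .
  have ddS: "dd J = sum d J" if "J \<subseteq> S" for J
  proof -
    have JN: "J \<subseteq> N" using that SN by auto
    have fJ: "finite J" using JN finN by (rule finite_subset)
    consider "J = {}" | k where "J = {k}" | "card J \<ge> 2"
    proof -
      have "card J = 0 \<or> card J = 1 \<or> card J \<ge> 2" by linarith
      thus ?thesis using that fJ card_1_singleton_iff[of J] by auto
    qed
    then show ?thesis
    proof cases
      case 1
      then show ?thesis unfolding dd_def using dd_act[OF JN] by simp
    next
      case (2 k)
      have "active (tprod F J) p = active (F k) p"
        using dd_act[OF JN] sumset_single[of k "\<lambda>i. active (F i) p"] 2 by simp
      then show ?thesis unfolding dd_def d_def using 2 by simp
    next
      case 3
      have "p \<in> (\<Inter>i\<in>J. Vtr (F i))" using that unfolding S_def by auto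
      then show ?thesis using assms(5) JN 3 unfolding transversal_def dd_def d_def N_def by blast
    qed
  qed
  have ddN: "dd J = dd (J \<inter> S)" if "J \<subseteq> N" for J
  proof -
    have fJ: "finite J" using that finN by (rule finite_subset)
    have "active (tprod F J) p = (+) (\<Sum>i\<in>J - J \<inter> S. c i) ` active (tprod F (J \<inter> S)) p"
      unfolding dd_act[OF that] dd_act[of "J \<inter> S", OF Int_lower1[THEN subset_trans, OF that]] using that
      by (intro sumset_split fJ) (auto intro!: sing)
    then show ?thesis unfolding dd_def
      by (simp add: convex_hull_translation aff_dim_translation_eq)
  qed
  have ddJ: "dd J = sum d (J \<inter> S)" if "J \<subseteq> N" for J
    using ddN[OF that] ddS[of "J \<inter> S"] by simp
  have ddle: "dd J \<le> m" for J
    unfolding dd_def m_def using aff_dim_le_DIM[of "convex hull (active (tprod F J) p)"] by simp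
  define \<sigma> where "\<sigma> = sum d S"
  have finS: "finite S" using SN finN by (rule finite_subset)
  have sig: "\<sigma> \<le> m" using ddle[of S] ddS[of S] unfolding \<sigma>_def by simp
  have key: "dd J = m \<longleftrightarrow> (\<sigma> = m \<and> S \<subseteq> J)" if "J \<subseteq> N" for J
  proof
    assume "\<sigma> = m \<and> S \<subseteq> J"
    then show "dd J = m" using ddJ[OF that] unfolding \<sigma>_def by (simp add: Int_absorb1)
  next
    assume e: "dd J = m"
    show "\<sigma> = m \<and> S \<subseteq> J"
    proof (cases "S \<subseteq> J")
      case True
      then show ?thesis using e ddJ[OF that] unfolding \<sigma>_def by (simp add: Int_absorb1)
    next
      case False
      then obtain i where i: "i \<in> S" "i \<notin> J" by blast
      have "sum d (J \<inter> S) \<le> sum d (S - {i})"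
        using i finS by (intro sum_mono2) (auto intro: d1')
      moreover have "sum d S = d i + sum d (S - {i})" using i finS by (simp add: sum.remove)
      ultimately have "dd J < \<sigma>" using ddJ[OF that] d1[OF i(1)] unfolding \<sigma>_def by simp
      with e sig show ?thesis by simp
    qed
  qed
  have vU: "p \<in> vertices_of (hyp_cells (tprod F J)) \<longleftrightarrow> dd J = m" if "J \<subseteq> N" for J
    unfolding dd_def m_def
    using vertex_hyp[OF prodctx.finT[OF ctx[OF that]] prodctx.neT[OF ctx[OF that]]] .
  have vI: "p \<in> vertices_of (int_cells F N) \<longleftrightarrow> S = N \<and> dd N = m"
  proof -
    have "p \<in> vertices_of (int_cells F N) \<longleftrightarrow> p \<in> (\<Inter>i\<in>N. Vtr (F i)) \<and> (\<Inter>i\<in>N. cell_of (F i) p) = {p}"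
    proof
      assume "p \<in> vertices_of (int_cells F N)"
      then obtain q where q: "q \<in> (\<Inter>i\<in>N. Vtr (F i))" "{p} = (\<Inter>i\<in>N. cell_of (F i) q)"
        unfolding vertices_of_def int_cells_def by blast
      have "q \<in> (\<Inter>i\<in>N. cell_of (F i) q)" unfolding cell_of_def by simp
      hence "q = p" using q(2) by blast
      thus "p \<in> (\<Inter>i\<in>N. Vtr (F i)) \<and> (\<Inter>i\<in>N. cell_of (F i) p) = {p}" using q by simp
    next
      assume "p \<in> (\<Inter>i\<in>N. Vtr (F i)) \<and> (\<Inter>i\<in>N. cell_of (F i) p) = {p}"
      hence "{p} \<in> int_cells F N" unfolding int_cells_def by blast
      thus "p \<in> vertices_of (int_cells F N)" unfolding vertices_of_def by simp
    qed
    also have "(\<Inter>i\<in>N. cell_of (F i) p) = cell_of (tprod F N) p"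
      using prodctx.F5[OF ctx[of N]] by simp
    also have "p \<in> (\<Inter>i\<in>N. Vtr (F i)) \<longleftrightarrow> S = N" unfolding S_def by auto
    also have "cell_of (tprod F N) p = {p} \<longleftrightarrow> dd N = m"
      unfolding dd_def m_def using cell_iff[OF prodctx.finT[OF ctx[of N]] prodctx.neT[OF ctx[of N]]] by simp
    finally show ?thesis .
  qed
  have vI': "p \<in> vertices_of (int_cells F N) \<longleftrightarrow> S = N \<and> \<sigma> = m"
    using vI key[of N] by auto
  have vUN: "p \<in> vertices_of (hyp_cells (tprod F N)) \<longleftrightarrow> \<sigma> = m"
    using vU[of N] key[of N] SN by auto
  have setL: "{J. J \<subseteq> N \<and> 1 \<le> card J \<and> card J \<le> n - 1 \<and> card J mod 2 = (n - 1) mod 2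
                     \<and> p \<in> vertices_of (hyp_cells (tprod F J))}
     = {J. J \<subseteq> N \<and> 1 \<le> card J \<and> card J \<le> n - 1 \<and> card J mod 2 = (n - 1) mod 2 \<and> \<sigma> = m \<and> S \<subseteq> J}"
  proof (rule Collect_cong)
    fix J show "(J \<subseteq> N \<and> 1 \<le> card J \<and> card J \<le> n - 1 \<and> card J mod 2 = (n - 1) mod 2
                     \<and> p \<in> vertices_of (hyp_cells (tprod F J))) =
       (J \<subseteq> N \<and> 1 \<le> card J \<and> card J \<le> n - 1 \<and> card J mod 2 = (n - 1) mod 2 \<and> \<sigma> = m \<and> S \<subseteq> J)"
      by (cases "J \<subseteq> N") (simp_all add: vU key)
  qed
  have setR: "{J. J \<subseteq> N \<and> 1 \<le> card J \<and> card J \<le> n - 2 \<and> card J mod 2 = n mod 2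
                     \<and> p \<in> vertices_of (hyp_cells (tprod F J))}
     = {J. J \<subseteq> N \<and> 1 \<le> card J \<and> card J \<le> n - 2 \<and> card J mod 2 = n mod 2 \<and> \<sigma> = m \<and> S \<subseteq> J}"
  proof (rule Collect_cong)
    fix J show "(J \<subseteq> N \<and> 1 \<le> card J \<and> card J \<le> n - 2 \<and> card J mod 2 = n mod 2
                     \<and> p \<in> vertices_of (hyp_cells (tprod F J))) =
       (J \<subseteq> N \<and> 1 \<le> card J \<and> card J \<le> n - 2 \<and> card J mod 2 = n mod 2 \<and> \<sigma> = m \<and> S \<subseteq> J)"
      by (cases "J \<subseteq> N") (simp_all add: vU key)
  qed
  have n2: "2 \<le> n" by (rule assms(1))
  have ar1: "\<And>c. c \<le> n \<Longrightarrow> c mod 2 = (n - 1) mod 2 \<Longrightarrow> c \<le> n - 1" using ar1[OF n2] by blast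
  have ar2: "\<And>c. c \<le> n \<Longrightarrow> c mod 2 = n mod 2 \<Longrightarrow> c \<noteq> n \<Longrightarrow> c \<le> n - 2" using ar2[OF n2] by blast
  have cle: "card J \<le> n" if "J \<subseteq> N" for J using card_mono[OF finN that] cardN by simp
  have goal: "(if p \<in> vertices_of (int_cells F N) then 1 else 0)
           + card {J. J \<subseteq> N \<and> 1 \<le> card J \<and> card J \<le> n - 1 \<and> card J mod 2 = (n - 1) mod 2
                     \<and> p \<in> vertices_of (hyp_cells (tprod F J))}
         = (if p \<in> vertices_of (hyp_cells (tprod F N)) then 1 else (0::nat))
           + card {J. J \<subseteq> N \<and> 1 \<le> card J \<and> card J \<le> n - 2 \<and> card J mod 2 = n mod 2
                     \<and> p \<in> vertices_of (hyp_cells (tprod F J))}"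
  proof (cases "\<sigma> = m")
    case False
    then show ?thesis unfolding setL setR vI' vUN by simp
  next
    case True
    have Sne: "S \<noteq> {}"
    proof
      assume "S = {}"
      hence "\<sigma> = 0" unfolding \<sigma>_def by simp
      moreover have "m \<ge> 2" unfolding m_def using assms(1,2) by simp
      ultimately show False using True by simp
    qed
    have c1: "1 \<le> card J" if "S \<subseteq> J" "J \<subseteq> N" for J
    proof -
      have "finite J" using that(2) finN by (rule finite_subset)
      moreover have "J \<noteq> {}" using that(1) Sne by blast
      ultimately show ?thesis by (simp add: Suc_le_eq card_gt_0_iff)
    qed
    show ?thesis
    proof (cases "S = N")
      case True2: True
      have e1: "{J. J \<subseteq> N \<and> 1 \<le> card J \<and> card J \<le> n - 1 \<and> card J mod 2 = (n - 1) mod 2 \<and> \<sigma> = m \<and> S \<subseteq> J} = {}"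
        using True2 cardN n2 by (auto dest: subset_antisym)
      have e2: "{J. J \<subseteq> N \<and> 1 \<le> card J \<and> card J \<le> n - 2 \<and> card J mod 2 = n mod 2 \<and> \<sigma> = m \<and> S \<subseteq> J} = {}"
        using True2 cardN n2 by (auto dest: subset_antisym)
      show ?thesis unfolding setL setR vI' vUN e1 e2 using True True2 by simp
    next
      case False2: False
      then obtain r where r: "r \<in> N" "r \<notin> S" using SN by blast
      define X1 where "X1 = {J. S \<subseteq> J \<and> J \<subseteq> N \<and> card J mod 2 = (n - 1) mod 2}"
      define X0 where "X0 = {J. S \<subseteq> J \<and> J \<subseteq> N \<and> card J mod 2 = n mod 2}"
      define R where "R = {J. J \<subseteq> N \<and> 1 \<le> card J \<and> card J \<le> n - 2 \<and> card J mod 2 = n mod 2 \<and> \<sigma> = m \<and> S \<subseteq> J}"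
      have eL: "{J. J \<subseteq> N \<and> 1 \<le> card J \<and> card J \<le> n - 1 \<and> card J mod 2 = (n - 1) mod 2 \<and> \<sigma> = m \<and> S \<subseteq> J} = X1"
        unfolding X1_def using True c1 cle ar1 by blast
      have eR: "X0 = insert N R"
      proof
        show "X0 \<subseteq> insert N R"
        proof
          fix J assume J: "J \<in> X0"
          show "J \<in> insert N R"
          proof (cases "J = N")
            case False
            have "card J \<noteq> n"
            proof
              assume "card J = n"
              hence "card J = card N" using cardN by simp
              moreover have "J \<subseteq> N" using J unfolding X0_def by simp
              ultimately have "J = N" using finN card_subset_eq by blast
              with False show False by simp
            qed
            hence "card J \<le> n - 2" using ar2[of "card J"] cle[of J] J unfolding X0_def by simp
            then show ?thesis using J True c1 unfolding X0_def R_def by simp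
          qed simp
        qed
        show "insert N R \<subseteq> X0"
          unfolding X0_def R_def using SN cardN by auto
      qed
      have NR: "N \<notin> R" unfolding R_def using cardN n2 by auto
      have finR: "finite R"
        by (rule finite_subset[of _ "Pow N"]) (auto simp: R_def finN)
      have nn: "n - 1 + 1 = n" using n2 by simp
      have "card X1 = card X0" unfolding X1_def X0_def using count_toggle[OF finN r, of "n - 1"] unfolding nn .
      also have "\<dots> = Suc (card R)" unfolding eR using NR finR by simp
      finally have "card X1 = Suc (card R)" .
      then show ?thesis unfolding setL setR vI' vUN eL R_def[symmetric] using True False2 by simp
    qed
  qed
  then show ?thesis unfolding N_def .
qed


end
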